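(* Let $K\ge 2$ and let $r_1\prec r_2\prec\cdots\prec r_K$ be ordered ranks. Let $D=\{(\mathbf{x}_i,y_i)\}_{i=1}^N$ be a training set with inputs $\mathbf{x}_i\in\mathcal{X}$ and ranks $y_i\in\{r_1,\dots,r_K\}$, and for $k=1,\dots,K-1$ define the extended binary labels $y_i^{(k)}=\mathbb{1}\{y_i\succ r_k\}\in\{0,1\}$. Let $g(\mathbf{x},\mathbf{W})\in\mathbb{R}$ be the (scalar) output of a model with parameters $\mathbf{W}$, let $\mathbf{b}=(b_1,\dots,b_{K-1})\in\mathbb{R}^{K-1}$ be bias parameters, let $\sigma(z)=1/(1+\exp(-z))$, and let $\lambda^{(1)},\dots,\lambda^{(K-1)}>0$ be fixed task weights. Consider the loss $$L(\mathbf{W},\mathbf{b})=-\sum_{i=1}^N\sum_{k=1}^{K-1}\lambda^{(k)}\Big[\log\big(\sigma(g(\mathbf{x}_i,\mathbf{W})+b_k)\big)\,y_i^{(k)}+\log\big(1-\sigma(g(\mathbf{x}_i,\mathbf{W})+b_k)\big)\,(1-y_i^{(k)})\Big].$$ Then any optimal solution $(\mathbf{W}^*,\mathbf{b}^* )$ minimizing $L$ satisfies $b_1^*\ge b_2^*\ge\cdots\ge b_{K-1}^*$.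
   Context: This is the loss of the CORAL (consistent rank logits) framework: a single shared score $g(\mathbf{x},\mathbf{W})$ is fed to $K-1$ binary classifiers that differ only in their bias terms $b_k$; the predicted probability for task $k$ is $\widehat P(y^{(k)}=1)=\sigma(g(\mathbf{x},\mathbf{W})+b_k)$. *)

theory Defs
  imports Complex_Main
begin

definition sigmoid :: "real \<Rightarrow> real" where
  "sigmoid z = 1 / (1 + exp (- z))"

definition ext_label :: "('r::linorder) \<Rightarrow> 'r \<Rightarrow> real" where
  "ext_label yi rk = (if rk < yi then 1 else 0)"

definition coral_loss ::
  "nat \<Rightarrow> nat \<Rightarrow> (nat \<Rightarrow> 'r::linorder) \<Rightarrow> (nat \<Rightarrow> 'x) \<Rightarrow> (nat \<Rightarrow> 'r)
   \<Rightarrow> ('x \<Rightarrow> 'w \<Rightarrow> real) \<Rightarrow> (nat \<Rightarrow> real) \<Rightarrow> 'w \<Rightarrow> (nat \<Rightarrow> real) \<Rightarrow> real" where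
  "coral_loss K N r x y g lam W b =
     - (\<Sum>i=1..N. \<Sum>k=1..K-1. lam k *
          (ln (sigmoid (g (x i) W + b k)) * ext_label (y i) (r k)
           + ln (1 - sigmoid (g (x i) W + b k)) * (1 - ext_label (y i) (r k))))"

end

theory Submission
  imports Defs
begin

lemma phi_eq:
  fixes z e :: real
  shows "ln (sigmoid z) * e + ln (1 - sigmoid z) * (1 - e) = - ln (1 + exp (-z)) - z*(1-e)"
proof -
  have p: "1 + exp (-z) > 0" by (simp add: add_pos_pos)
  have a: "ln (sigmoid z) = - ln (1 + exp (-z))"
    unfolding sigmoid_def using p by (simp add: ln_div)
  have "1 - sigmoid z = exp (-z) / (1 + exp (-z))"
    unfolding sigmoid_def using p by (simp add: field_simps)
  hence b: "ln (1 - sigmoid z) = -z - ln (1 + exp (-z))"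
    using p by (simp add: ln_div)
  show ?thesis unfolding a b by (simp add: algebra_simps)
qed

lemma phi_deriv:
  fixes z e :: real
  shows "((\<lambda>z. - ln (1 + exp (-z)) - z*(1-e)) has_real_derivative (e - sigmoid z)) (at z)"
proof -
  have p: "1 + exp (-z) > 0" by (simp add: add_pos_pos)
  have "((\<lambda>z. - ln (1 + exp (-z)) - z*(1-e)) has_real_derivative
         (- ((exp (-z) * (-1)) / (1 + exp (-z))) - (1 - e))) (at z)"
    using p by (auto intro!: derivative_eq_intros)
  moreover have "- ((exp (-z) * (-1)) / (1 + exp (-z))) - (1 - e) = e - sigmoid z"
    unfolding sigmoid_def using p by (simp add: field_simps)
  ultimately show ?thesis by metis
qed

lemma sigmoid_strict_mono:
  fixes a b :: real
  assumes "a < b" shows "sigmoid a < sigmoid b"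
proof -
  have "exp (-b) < exp (-a)" using assms by simp
  then show ?thesis unfolding sigmoid_def
    by (simp add: divide_strict_left_mono add_pos_pos)
qed

theorem theorem1:
  fixes K N :: nat and r :: "nat \<Rightarrow> 'r::linorder" and x :: "nat \<Rightarrow> 'x"
    and y :: "nat \<Rightarrow> 'r" and g :: "'x \<Rightarrow> 'w \<Rightarrow> real" and lam :: "nat \<Rightarrow> real"
    and Wopt :: 'w and bopt :: "nat \<Rightarrow> real"
  assumes "K \<ge> 2"
    and "strict_mono_on {1..K} r"
    and "N \<ge> 1"
    and "\<forall>i\<in>{1..N}. y i \<in> r ` {1..K}"
    and "\<forall>k\<in>{1..K-1}. lam k > 0"
    and "\<forall>W b. coral_loss K N r x y g lam Wopt bopt \<le> coral_loss K N r x y g lam W b"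
  shows "\<forall>k. 1 \<le> k \<and> k < K - 1 \<longrightarrow> bopt k \<ge> bopt (k + 1)"
proof (intro allI impI)
  fix k assume k: "1 \<le> k \<and> k < K - 1"
  define s where "s i = g (x i) Wopt" for i
  define e where "e i j = ext_label (y i) (r j)" for i j
  define G where "G j t = (\<Sum>i=1..N. - ln (1 + exp (-(s i + t))) - (s i + t)*(1 - e i j))" for j t
  have L: "coral_loss K N r x y g lam Wopt b = -(\<Sum>j\<in>{1..K-1}. lam j * G j (b j))" for b
  proof -
    have "coral_loss K N r x y g lam Wopt b =
        -(\<Sum>i=1..N. \<Sum>j=1..K-1. lam j * (- ln (1 + exp (-(s i + b j))) - (s i + b j)*(1 - e i j)))"
      unfolding coral_loss_def s_def e_def phi_eq by simp
    also have "\<dots> = -(\<Sum>j\<in>{1..K-1}. lam j * G j (b j))"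
      unfolding G_def sum_distrib_left by (subst sum.swap) simp
    finally show ?thesis .
  qed
  have k1: "k \<in> {1..K-1}" "k+1 \<in> {1..K-1}" using k by auto
  have foc: "(\<Sum>i=1..N. sigmoid (s i + bopt j)) = (\<Sum>i=1..N. e i j)" if j: "j \<in> {1..K-1}" for j
  proof -
    define C where "C = (\<Sum>j'\<in>{1..K-1}-{j}. lam j' * G j' (bopt j'))"
    have H: "coral_loss K N r x y g lam Wopt (bopt(j:=t)) = -(lam j * G j t + C)" for t
    proof -
      have "(\<Sum>j'\<in>{1..K-1}. lam j' * G j' ((bopt(j:=t)) j')) = lam j * G j t + (\<Sum>j'\<in>{1..K-1}-{j}. lam j' * G j' ((bopt(j:=t)) j'))"
        using j by (subst sum.remove[of _ j]) auto
      also have "(\<Sum>j'\<in>{1..K-1}-{j}. lam j' * G j' ((bopt(j:=t)) j')) = C"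
        unfolding C_def by (rule sum.cong) auto
      finally show ?thesis unfolding L by simp
    qed
    have D: "((\<lambda>t. -(lam j * G j t + C)) has_real_derivative -(lam j * (\<Sum>i=1..N. e i j - sigmoid (s i + bopt j)))) (at (bopt j))"
    proof -
      have DG: "(G j has_real_derivative (\<Sum>i=1..N. e i j - sigmoid (s i + bopt j))) (at (bopt j))"
        unfolding G_def[abs_def]
      proof (rule DERIV_sum)
        fix i
        have "((\<lambda>t. s i + t) has_real_derivative 1) (at (bopt j))"
          by (auto intro!: derivative_eq_intros)
        from DERIV_chain2[OF phi_deriv[where z="s i + bopt j" and e="e i j"] this]
        show "((\<lambda>t. - ln (1 + exp (-(s i + t))) - (s i + t)*(1 - e i j)) has_real_derivative
               (e i j - sigmoid (s i + bopt j))) (at (bopt j))" by simp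
      qed
      show ?thesis using DERIV_minus[OF DERIV_add[OF DERIV_cmult[OF DG, of "lam j"] DERIV_const[of C]]]
        by simp
    qed
    have "-(lam j * (\<Sum>i=1..N. e i j - sigmoid (s i + bopt j))) = 0"
    proof (rule DERIV_local_min[OF D, of 1])
      show "\<forall>t. \<bar>bopt j - t\<bar> < 1 \<longrightarrow> -(lam j * G j (bopt j) + C) \<le> -(lam j * G j t + C)"
        using assms(6) H by (metis fun_upd_triv)
    qed simp
    moreover have "lam j > 0" using assms(5) j by auto
    ultimately show ?thesis by (simp add: sum_subtractf)
  qed
  show "bopt k \<ge> bopt (k + 1)"
  proof (rule ccontr)
    assume "\<not> bopt k \<ge> bopt (k + 1)"
    hence lt: "bopt k < bopt (k+1)" by simp
    have "(\<Sum>i=1..N. sigmoid (s i + bopt k)) < (\<Sum>i=1..N. sigmoid (s i + bopt (k+1)))"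
      using assms(3) lt by (intro sum_strict_mono sigmoid_strict_mono) auto
    also have "\<dots> = (\<Sum>i=1..N. e i (k+1))" using foc k1 by simp
    also have "\<dots> \<le> (\<Sum>i=1..N. e i k)"
    proof (rule sum_mono)
      fix i
      have "r k < r (k+1)" using assms(2) k 
      proof -
        have "k \<in> {1..K}" "k+1 \<in> {1..K}" using k by auto
        then show ?thesis using assms(2) strict_mono_onD by fastforce
      qed
      then show "e i (k+1) \<le> e i k" unfolding e_def ext_label_def by auto
    qed
    also have "\<dots> = (\<Sum>i=1..N. sigmoid (s i + bopt k))" using foc k1 by simp
    finally show False by simp
  qed
qed

end
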